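(* Let $\{(Q^{m,n}_{ij})_{i,j\in\mathbb{N}}\}$ be a discrete time Markov process. Suppose there exist $k_0\in\mathbb{N}$ and a sequence $(\lambda_n)$ with $0<\lambda_n<1$ for all $n$, satisfying $\sum_{n}\lambda_n=\infty$ and $\sum_{j=1}^n\frac{\prod_{k=1}^n(1-\lambda_k)}{1-\lambda_j}\to0$ as $n\to\infty$, such that $Q^{n-1,n}_{ik_0}\ge\lambda_n$ for all $i\in\mathbb{N}$ and all $n$ (for which $Q^{n-1,n}$ is defined). Then the Markov process satisfies the ergodic principle, i.e. $\lim_{n\to\infty}|Q^{m,n}_{ik}-Q^{m,n}_{jk}|=0$ for every $i,j,k,m$.
   Context: $\mathbb{N}=\{1,2,\dots\}$. A matrix $(Q_{ij})_{i,j\in\mathbb{N}}$ is stochastic if $Q_{ij}\ge0$ and $\sum_jQ_{ij}=1$ for every $i$. A discrete time Markov process is a family of stochastic matrices $\{(Q^{m,n}_{ij})_{i,j\in\mathbb{N}}\}$ indexed by integer times $m<n$, satisfying the Kolmogorov–Chapman equation $Q^{m,l}_{ij}=\sum_{k=1}^\infty Q^{m,n}_{ik}Q^{n,l}_{kj}$ for all $m<n<l$ and all $i,j$. *)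

theory Defs
  imports "HOL-Analysis.Analysis"
begin

text \<open>States are the positive naturals {1,2,...}; times are integers.
  Q m n i j is the transition probability from state i at time m to state j at time n.\<close>

definition stochastic_matrix :: "(nat \<Rightarrow> nat \<Rightarrow> real) \<Rightarrow> bool" where
  "stochastic_matrix P \<longleftrightarrow>
     (\<forall>i\<ge>1. (\<forall>j\<ge>1. P i j \<ge> 0) \<and> ((\<lambda>j. P i j) has_sum 1) {1..})"

definition markov_process :: "(int \<Rightarrow> int \<Rightarrow> nat \<Rightarrow> nat \<Rightarrow> real) \<Rightarrow> bool" where
  "markov_process Q \<longleftrightarrow>
     (\<forall>m n. m < n \<longrightarrow> stochastic_matrix (Q m n)) \<and>
     (\<forall>m n l i j. m < n \<longrightarrow> n < l \<longrightarrow> i \<ge> 1 \<longrightarrow> j \<ge> 1 \<longrightarrow>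
        ((\<lambda>k. Q m n i k * Q n l k j) has_sum Q m l i j) {1..})"

definition ergodic_principle :: "(int \<Rightarrow> int \<Rightarrow> nat \<Rightarrow> nat \<Rightarrow> real) \<Rightarrow> bool" where
  "ergodic_principle Q \<longleftrightarrow>
     (\<forall>i j k m. i \<ge> 1 \<longrightarrow> j \<ge> 1 \<longrightarrow> k \<ge> 1 \<longrightarrow>
        ((\<lambda>n. \<bar>Q m n i k - Q m n j k\<bar>) \<longlongrightarrow> 0) at_top)"

end

theory Submission imports Defs begin

lemma hs_term_le:
  fixes g :: "nat \<Rightarrow> real"
  assumes "(g has_sum s) {1..}" "\<forall>l\<ge>1. g l \<ge> 0" "k0 \<ge> 1"
  shows "g k0 \<le> s"
proof -
  have "(g has_sum g k0) {k0}" using has_sum_finite[of "{k0}" g] by simp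
  then show ?thesis
    by (rule has_sum_mono_neutral[OF _ assms(1)]) (use assms in auto)
qed

lemma avg_bound:
  fixes p f :: "nat \<Rightarrow> real"
  assumes p0: "\<forall>l\<ge>1. p l \<ge> 0" and p1: "(p has_sum 1) {1..}" and k0: "k0 \<ge> 1"
    and pk: "p k0 \<ge> lam" and l0: "lam \<ge> 0"
    and v: "((\<lambda>l. p l * f l) has_sum v) {1..}"
    and fb: "\<forall>l\<ge>1. a \<le> f l \<and> f l \<le> a + w"
  shows "lam * f k0 + (1-lam)*a \<le> v \<and> v \<le> lam * f k0 + (1-lam)*a + (1-lam)*w"
proof -
  have h1: "((\<lambda>l. p l * f l + (- (a * p l))) has_sum (v + - (a*1))) {1..}"
    by (rule has_sum_add[OF v]) (use has_sum_uminusI[OF has_sum_cmult_right[OF p1]] in auto)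
  have h2: "((\<lambda>l. (a+w) * p l + (- (p l * f l))) has_sum ((a+w)*1 + - v)) {1..}"
    by (rule has_sum_add[OF has_sum_cmult_right[OF p1]]) (use has_sum_uminusI[OF v] in auto)
  have "p k0 * f k0 + (- (a * p k0)) \<le> v + - (a*1)"
    apply (rule hs_term_le[OF h1 _ k0])
    using p0 fb by (smt (verit) mult_left_mono mult.commute)
  hence A: "p k0 * (f k0 - a) \<le> v - a" by (simp add: algebra_simps)
  have "(a+w) * p k0 + (- (p k0 * f k0)) \<le> (a+w)*1 + - v"
    apply (rule hs_term_le[OF h2 _ k0])
    using p0 fb by (smt (verit) mult_left_mono mult.commute)
  hence B: "p k0 * (a + w - f k0) \<le> a + w - v" by (simp add: algebra_simps)
  have fk: "a \<le> f k0" "f k0 \<le> a + w" using fb k0 by auto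
  have "lam * (f k0 - a) \<le> p k0 * (f k0 - a)" using pk fk by (intro mult_right_mono) auto
  moreover have "lam * (a + w - f k0) \<le> p k0 * (a + w - f k0)" using pk fk by (intro mult_right_mono) auto
  ultimately show ?thesis using A B by (simp add: algebra_simps)
qed

lemma column_osc:
  fixes Q :: "int \<Rightarrow> int \<Rightarrow> nat \<Rightarrow> nat \<Rightarrow> real" and lam :: "nat \<Rightarrow> real"
  assumes mp: "markov_process Q" and k0: "k0 \<ge> 1"
    and lam: "\<And>n. n \<ge> 1 \<Longrightarrow> 0 < lam n \<and> lam n < 1"
    and col: "\<And>n i. n \<ge> 1 \<Longrightarrow> i \<ge> 1 \<Longrightarrow> Q (int n - 1) (int n) i k0 \<ge> lam n"
    and k: "k \<ge> 1"
  shows "\<exists>a. \<forall>l\<ge>1. a \<le> Q (n - 1 - int d) n l k \<and> Q (n - 1 - int d) n l k \<le> a +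
     (\<Prod>r\<in>{r::nat. 1 \<le> r \<and> n - 1 - int d < int r \<and> int r < n}. 1 - lam r)"
proof (induction d)
  case 0
  have S: "{r::nat. 1 \<le> r \<and> n - 1 - int 0 < int r \<and> int r < n} = {}" by auto
  have "0 \<le> Q (n-1) n l k \<and> Q (n-1) n l k \<le> 1" if "l \<ge> 1" for l
  proof -
    have st: "stochastic_matrix (Q (n-1) n)" using mp unfolding markov_process_def by auto
    hence "\<forall>j\<ge>1. Q (n-1) n l j \<ge> 0" "((\<lambda>j. Q (n-1) n l j) has_sum 1) {1..}"
      using that unfolding stochastic_matrix_def by auto
    thus ?thesis using hs_term_le[of "\<lambda>j. Q (n-1) n l j" 1 k] k by auto
  qed
  then show ?case unfolding S by (intro exI[of _ 0]) simp
next
  case (Suc d)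
  define m where "m = n - 1 - int d"
  define S where "S = (\<lambda>m. {r::nat. 1 \<le> r \<and> m < int r \<and> int r < n})"
  define W where "W = (\<lambda>m. \<Prod>r\<in>S m. 1 - lam r)"
  have mm: "n - 1 - int (Suc d) = m - 1" unfolding m_def by simp
  from Suc.IH obtain a where a: "\<forall>l\<ge>1. a \<le> Q m n l k \<and> Q m n l k \<le> a + W m"
    unfolding m_def W_def S_def by blast
  define mu where "mu = (if m \<ge> 1 then lam (nat m) else 0)"
  have mu0: "mu \<ge> 0" using lam unfolding mu_def by (auto simp: less_imp_le)
  have WW: "W (m-1) = (1 - mu) * W m"
  proof (cases "m \<ge> 1")
    case True
    have fin: "finite (S m)" unfolding S_def by (rule finite_subset[of _ "{..nat n}"]) (auto simp: m_def)
    have "S (m-1) = insert (nat m) (S m)" "nat m \<notin> S m" unfolding S_def using True by (auto simp: m_def)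
    then show ?thesis unfolding W_def mu_def using True fin by simp
  next
    case False
    have "S (m-1) = S m" unfolding S_def using False by auto
    then show ?thesis unfolding W_def mu_def using False by simp
  qed
  have lt: "m - 1 < m" "m < n" unfolding m_def by auto
  have "mu * Q m n k0 k + (1-mu)*a \<le> Q (m-1) n i k \<and>
        Q (m-1) n i k \<le> mu * Q m n k0 k + (1-mu)*a + (1-mu)*W m" if i: "i \<ge> 1" for i
  proof (rule avg_bound[OF _ _ k0 _ mu0 _ a])
    have st: "stochastic_matrix (Q (m-1) m)" using mp lt unfolding markov_process_def by auto
    thus "\<forall>l\<ge>1. Q (m-1) m i l \<ge> 0" "((\<lambda>j. Q (m-1) m i j) has_sum 1) {1..}"
      using i unfolding stochastic_matrix_def by auto
    show "mu \<le> Q (m-1) m i k0"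
    proof (cases "m \<ge> 1")
      case True
      then show ?thesis using col[of "nat m" i] i unfolding mu_def by auto
    next
      case False
      then show ?thesis using st i k0 unfolding mu_def stochastic_matrix_def by auto
    qed
    show "((\<lambda>l. Q (m-1) m i l * Q m n l k) has_sum Q (m-1) n i k) {1..}"
      using mp lt i k unfolding markov_process_def by auto
  qed
  hence "\<forall>l\<ge>1. mu * Q m n k0 k + (1-mu)*a \<le> Q (m-1) n l k \<and>
        Q (m-1) n l k \<le> mu * Q m n k0 k + (1-mu)*a + W (m-1)" unfolding WW by simp
  then show ?case unfolding mm W_def S_def by blast
qed

theorem theorem3p3:
  fixes Q :: "int \<Rightarrow> int \<Rightarrow> nat \<Rightarrow> nat \<Rightarrow> real"
    and lam :: "nat \<Rightarrow> real"
    and k0 :: nat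
  assumes "markov_process Q"
    and "k0 \<ge> 1"
    and "\<And>n. n \<ge> 1 \<Longrightarrow> 0 < lam n \<and> lam n < 1"
    and "filterlim (\<lambda>N. \<Sum>n=1..N. lam n) at_top sequentially"
    and "(\<lambda>n. \<Sum>j=1..n. (\<Prod>k=1..n. 1 - lam k) / (1 - lam j)) \<longlonglongrightarrow> 0"
    and "\<And>n i. n \<ge> 1 \<Longrightarrow> i \<ge> 1 \<Longrightarrow> Q (int n - 1) (int n) i k0 \<ge> lam n"
  shows "ergodic_principle Q"
  unfolding ergodic_principle_def
proof (intro allI impI)
  fix i j k :: nat and m :: int
  assume i: "i \<ge> 1" and j: "j \<ge> 1" and k: "k \<ge> 1"
  define P where "P = (\<lambda>N. \<Prod>r=1..N. 1 - lam r)"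
  have Ppos: "P N > 0" for N unfolding P_def using assms(3) by (intro prod_pos) auto
  have P0: "P \<longlonglongrightarrow> 0"
  proof (rule tendsto_sandwich[OF _ _ tendsto_const assms(5)])
    show "\<forall>\<^sub>F N in sequentially. 0 \<le> P N" using Ppos by (simp add: less_imp_le)
    show "\<forall>\<^sub>F N in sequentially. P N \<le> (\<Sum>j=1..N. (\<Prod>k=1..N. 1 - lam k) / (1 - lam j))"
      using eventually_ge_at_top[of "1::nat"]
    proof eventually_elim
      case (elim N)
      have l1: "0 < 1 - lam 1" "1 - lam 1 \<le> 1" using assms(3)[of 1] by auto
      have "P N \<le> P N / (1 - lam 1)" using l1 Ppos[of N]
        by (simp add: le_divide_eq)
      also have "\<dots> \<le> (\<Sum>j=1..N. P N / (1 - lam j))"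
        by (rule member_le_sum[of 1 _ "\<lambda>j. P N / (1 - lam j)"])
           (use elim Ppos[of N] assms(3) in \<open>auto intro!: divide_nonneg_pos less_imp_le\<close>)
      finally show ?case unfolding P_def .
    qed
  qed
  define c where "c = nat m"
  define F where "F = (\<lambda>n::int. P (nat (n - 1)) / P c)"
  have lim_nat: "filterlim (\<lambda>n::int. nat (n - 1)) at_top at_top"
    by (rule filterlim_compose[OF filterlim_nat_sequentially]) (auto simp: filterlim_at_top intro!: eventually_mono[OF eventually_ge_at_top[of "_ + 1"]])
  have F0: "(F \<longlongrightarrow> 0) at_top"
    unfolding F_def using tendsto_divide_zero[OF filterlim_compose[OF P0 lim_nat], of "P c"] by simp
  show "((\<lambda>n. \<bar>Q m n i k - Q m n j k\<bar>) \<longlongrightarrow> 0) at_top"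
  proof (rule tendsto_sandwich[OF _ _ tendsto_const F0])
    show "\<forall>\<^sub>F n in at_top. 0 \<le> \<bar>Q m n i k - Q m n j k\<bar>" by simp
    have ev: "\<forall>\<^sub>F n in at_top. n \<ge> max (m + 1) (int c + 1)" by (rule eventually_ge_at_top)
    show "\<forall>\<^sub>F n in at_top. \<bar>Q m n i k - Q m n j k\<bar> \<le> F n"
      using ev
    proof eventually_elim
      case (elim n)
      define d where "d = nat (n - 1 - m)"
      have md: "m = n - 1 - int d" using elim unfolding d_def by auto
      define S where "S = {r::nat. 1 \<le> r \<and> n - 1 - int d < int r \<and> int r < n}"
      obtain a where a: "\<forall>l\<ge>1. a \<le> Q m n l k \<and> Q m n l k \<le> a + (\<Prod>r\<in>S. 1 - lam r)"
        using column_osc[OF assms(1,2,3,6) k, of n d] unfolding md S_def by blast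
      have Seq: "S = {c+1..nat (n-1)}" unfolding S_def c_def md[symmetric] using elim by auto
      have split: "{1..nat (n-1)} = {1..c} \<union> {c+1..nat (n-1)}" using elim by auto
      have "P (nat (n-1)) = P c * (\<Prod>r\<in>S. 1 - lam r)"
        unfolding P_def Seq split by (rule prod.union_disjoint) auto
      hence "(\<Prod>r\<in>S. 1 - lam r) = F n" unfolding F_def using Ppos[of c] by simp
      moreover have "a \<le> Q m n i k \<and> Q m n i k \<le> a + (\<Prod>r\<in>S. 1 - lam r)" using a i by blast
      moreover have "a \<le> Q m n j k \<and> Q m n j k \<le> a + (\<Prod>r\<in>S. 1 - lam r)" using a j by blast
      ultimately show ?case by linarith
    qed
  qed
qed

end
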